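(* There is an absolute constant $c>0$ such that for every integer $n>0$ that is a power of $2$ and every integer $s$ with $0\le s<n$, if $X$ is the point set obtained from $\mathrm{BRS}(n)$ by a cyclic shift by $s$ units, then $\mathrm{WB}^{(2)}(X)\ge c\, n\log n$.
   Context: Bit reversal sequence: for an integer $i\ge0$, a set $\mathcal R$ of $2^i$ rows and a set $\mathcal C$ of $2^i$ columns, $\mathrm{BRS}(i,\mathcal R,\mathcal C)$ is defined recursively: $\mathrm{BRS}(0,\{R\},\{C\})$ is the single point $R\cap C$; and $\mathrm{BRS}(i+1,\mathcal R,\mathcal C)=\mathrm{BRS}(i,\mathcal R_{odd},\mathcal C_{left})\cup\mathrm{BRS}(i,\mathcal R_{even},\mathcal C_{right})$, where $\mathcal C_{left}$ are the leftmost $2^i$ columns of $\mathcal C$, $\mathcal C_{right}=\mathcal C\setminus\mathcal C_{left}$, and, indexing $\mathcal R=\{R_1,\dots,R_{2^{i+1}}\}$ from bottom to top, $\mathcal R_{odd}$ and $\mathcal R_{even}$ are the odd- and even-indexed rows. For $n=2^i$, $\mathrm{BRS}(n)=\mathrm{BRS}(i,\mathcal R,\mathcal C)$ with $\mathcal C$ the columns $x=1,\dots,n$ and $\mathcal R$ the rows $y=1,\dots,n$. The cyclic shift by $s$ units maps each point $(x,y)$ to $(((x-1+s)\bmod n)+1,\;y)$. Second Wilber bound: for a point set $X$ and $p\in X$, $\mathrm{funnel}(X,p)$ is the set of $q\in X$ with $q.y<p.y$ such that the smallest closed axis-parallel rectangle containing $p,q$ contains no point of $X\setminus\{p,q\}$;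 writing it as $a_1,\dots,a_r$ in increasing $y$-order, $\mathrm{alt}(X,p)$ is the number of $1\le i<r$ such that one of $a_i,a_{i+1}$ is strictly left of $p$ and the other strictly right of $p$; $\mathrm{WB}^{(2)}(X)=|X|+\sum_{p\in X}\mathrm{alt}(X,p)$. *)

theory Defs
  imports "HOL-Analysis.Analysis"
begin

text \<open>Points are pairs (x, y) of naturals: x = column, y = row.
  Rows are given as a list ordered bottom to top, columns as a list ordered left to right.\<close>

definition odd_rows :: "'a list \<Rightarrow> 'a list" where
  "odd_rows R = [R ! k. k \<leftarrow> [0..<length R], even k]"   \<comment> \<open>R_1, R_3, ... (1-based odd)\<close>

definition even_rows :: "'a list \<Rightarrow> 'a list" where
  "even_rows R = [R ! k. k \<leftarrow> [0..<length R], odd k]"   \<comment> \<open>R_2, R_4, ... (1-based even)\<close>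

primrec brs :: "nat \<Rightarrow> nat list \<Rightarrow> nat list \<Rightarrow> (nat \<times> nat) set" where
  "brs 0 R C = {(hd C, hd R)}"
| "brs (Suc i) R C = brs i (odd_rows R) (take (2^i) C) \<union> brs i (even_rows R) (drop (2^i) C)"

text \<open>BRS(n) for n = 2^i: columns x = 1..n, rows y = 1..n.\<close>
definition BRS :: "nat \<Rightarrow> (nat \<times> nat) set" where
  "BRS i = brs i [1..<2^i+1] [1..<2^i+1]"

definition cyc_shift :: "nat \<Rightarrow> nat \<Rightarrow> nat \<times> nat \<Rightarrow> nat \<times> nat" where
  "cyc_shift n s p = (((fst p - 1 + s) mod n) + 1, snd p)"

definition in_box :: "nat \<times> nat \<Rightarrow> nat \<times> nat \<Rightarrow> nat \<times> nat \<Rightarrow> bool" where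
  "in_box p q z \<longleftrightarrow> min (fst p) (fst q) \<le> fst z \<and> fst z \<le> max (fst p) (fst q)
                   \<and> min (snd p) (snd q) \<le> snd z \<and> snd z \<le> max (snd p) (snd q)"

definition funnel :: "(nat \<times> nat) set \<Rightarrow> nat \<times> nat \<Rightarrow> (nat \<times> nat) set" where
  "funnel X p = {q \<in> X. snd q < snd p \<and> (\<forall>z \<in> X - {p, q}. \<not> in_box p q z)}"

definition alt :: "(nat \<times> nat) set \<Rightarrow> nat \<times> nat \<Rightarrow> nat" where
  "alt X p = (let L = sorted_key_list_of_set snd (funnel X p) in
     card {i. i + 1 < length L \<and>
       ((fst (L ! i) < fst p \<and> fst p < fst (L ! (i+1))) \<or>
        (fst (L ! (i+1)) < fst p \<and> fst p < fst (L ! i)))})"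

definition WB2 :: "(nat \<times> nat) set \<Rightarrow> nat" where
  "WB2 X = card X + (\<Sum>p\<in>X. alt X p)"

end

theory Submission
  imports Defs
begin

primrec rv :: "nat \<Rightarrow> nat \<Rightarrow> nat" where
  "rv 0 k = 0"
| "rv (Suc i) k = 2 * rv i (k mod 2^i) + (k div 2^i) mod 2"

lemma bit_mod_pow: "j < i \<Longrightarrow> bit ((a::nat) mod 2^i) j = bit a j"
  by (simp add: bit_take_bit_iff flip: take_bit_eq_mod)

lemma mod_pow_mod: "m \<le> i \<Longrightarrow> (a::nat) mod 2^i mod 2^m = a mod 2^m"
  by (simp add: le_imp_power_dvd mod_mod_cancel)

lemma rv_cmp:
  "m < i \<Longrightarrow> a mod 2^m = b mod 2^m \<Longrightarrow> bit a m \<Longrightarrow> \<not> bit b m \<Longrightarrow> rv i b < rv i a"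
proof (induction i arbitrary: a b m)
  case 0 then show ?case by simp
next
  case (Suc i)
  show ?case
  proof (cases "m < i")
    case True
    have "rv i (b mod 2^i) < rv i (a mod 2^i)"
      using Suc.IH[of m "a mod 2^i" "b mod 2^i"] Suc.prems True
      by (simp add: bit_mod_pow mod_pow_mod)
    then show ?thesis by simp
  next
    case False
    then have mi: "m = i" using Suc.prems by simp
    have "(a div 2^i) mod 2 = 1" "(b div 2^i) mod 2 = 0"
      using Suc.prems mi by (auto simp: bit_iff_odd odd_iff_mod_2_eq_one)
    then show ?thesis using Suc.prems mi by simp
  qed
qed

lemma lowdiff:
  "(a::nat) mod 2^j \<noteq> b mod 2^j \<Longrightarrow> \<exists>m<j. a mod 2^m = b mod 2^m \<and> bit a m \<noteq> bit b m"
proof (induction j)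
  case 0 then show ?case by simp
next
  case (Suc j)
  show ?case
  proof (cases "a mod 2^j = b mod 2^j")
    case True
    have "a mod 2^Suc j = 2^j * (a div 2^j mod 2) + a mod 2^j"
         "b mod 2^Suc j = 2^j * (b div 2^j mod 2) + b mod 2^j"
      using mod_mult2_eq[of a "2^j" 2] mod_mult2_eq[of b "2^j" 2]
      by (simp_all add: mult.commute)
    then have "bit a j \<noteq> bit b j" using True Suc.prems
      by (auto simp: bit_iff_odd) (simp_all add: odd_iff_mod_2_eq_one even_iff_mod_2_eq_zero)
    then show ?thesis using True by auto
  next
    case False then show ?thesis using Suc.IH by (meson less_SucI)
  qed
qed

lemma filt_even: "filter even [0..<2*m] = map (\<lambda>j. 2*j) [0..<m]"
  by (induction m) (auto simp: mult_2)

lemma filt_odd: "filter odd [0..<2*m] = map (\<lambda>j. 2*j+1) [0..<m]"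
  by (induction m) (auto simp: mult_2)

lemma concat_if: "concat (map (\<lambda>k. if P k then [f k] else []) xs) = map f (filter P xs)"
  by (induction xs) auto

lemma odd_rows_eq: "length R = 2*m \<Longrightarrow> odd_rows R = map (\<lambda>j. R!(2*j)) [0..<m]"
  unfolding odd_rows_def by (simp add: concat_if filt_even)

lemma even_rows_eq: "length R = 2*m \<Longrightarrow> even_rows R = map (\<lambda>j. R!(2*j+1)) [0..<m]"
  unfolding even_rows_def by (simp add: concat_if filt_odd)

lemma rv_lt: "rv i k < 2^i"
proof (induction i arbitrary: k)
  case 0 then show ?case by simp
next
  case (Suc i)
  have "rv i (k mod 2^i) + 1 \<le> 2^i" using Suc.IH[of "k mod 2^i"] by simp
  moreover have "k div 2^i mod 2 \<le> 1" by simp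
  ultimately show ?case by simp
qed

lemma rv_less_pow: "k < 2^i \<Longrightarrow> rv (Suc i) k = 2 * rv i k"
  by simp

lemma brs_char:
  "length R = 2^i \<Longrightarrow> length C = 2^i \<Longrightarrow> brs i R C = (\<lambda>k. (C!k, R!(rv i k))) ` {..<2^i}"
proof (induction i arbitrary: R C)
  case 0
  then show ?case by (cases R; cases C) auto
next
  case (Suc i)
  let ?m = "2^i::nat"
  let ?f = "\<lambda>k. (C!k, R!(rv (Suc i) k))"
  have lR: "length R = 2 * ?m" using Suc.prems by simp
  have o: "odd_rows R = map (\<lambda>j. R!(2*j)) [0..<?m]" by (rule odd_rows_eq[OF lR])
  have e: "even_rows R = map (\<lambda>j. R!(2*j+1)) [0..<?m]" by (rule even_rows_eq[OF lR])
  have A: "brs i (odd_rows R) (take ?m C) = ?f ` {..<?m}"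
  proof -
    have "brs i (odd_rows R) (take ?m C) = (\<lambda>k. (take ?m C!k, odd_rows R!(rv i k))) ` {..<?m}"
      using Suc.IH[of "odd_rows R" "take ?m C"] Suc.prems o by simp
    also have "\<dots> = ?f ` {..<?m}"
      using o by (intro image_cong) (auto simp: rv_lt rv_less_pow)
    finally show ?thesis .
  qed
  have B: "brs i (even_rows R) (drop ?m C) = ?f ` {?m..<2*?m}"
  proof -
    have "brs i (even_rows R) (drop ?m C) = (\<lambda>k. (drop ?m C!k, even_rows R!(rv i k))) ` {..<?m}"
      using Suc.IH[of "even_rows R" "drop ?m C"] Suc.prems e by simp
    also have "\<dots> = (\<lambda>k. ?f (?m + k)) ` {..<?m}"
    proof (intro image_cong refl)
      fix k assume k: "k \<in> {..<?m}"
      have d: "(?m + k) div ?m = 1" using k by (simp add: div_nat_eqI)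
      have md: "(?m + k) mod ?m = k" using k by simp
      show "(drop ?m C!k, even_rows R!(rv i k)) = ?f (?m + k)"
        using k d md e Suc.prems by (simp add: rv_lt)
    qed
    also have "\<dots> = ?f ` ((\<lambda>k. ?m + k) ` {..<?m})" by (simp add: image_image)
    also have "(\<lambda>k. ?m + k) ` {..<?m} = {?m..<2*?m}"
      by (simp add: lessThan_atLeast0 mult_2)
    finally show ?thesis .
  qed
  have "{..<2^Suc i} = {..<?m} \<union> {?m..<2*?m}" by auto
  then show ?case using A B by (simp only: brs.simps image_Un)
qed

lemma BRS_eq: "BRS i = (\<lambda>k. (k+1, rv i k + 1)) ` {..<2^i}"
  unfolding BRS_def by (subst brs_char) (auto simp del: upt_Suc simp: rv_lt intro!: image_cong)

definition pt :: "nat \<Rightarrow> nat \<Rightarrow> nat \<Rightarrow> nat \<times> nat" where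
  "pt i s k = ((k+s) mod 2^i + 1, rv i k + 1)"

definition XX :: "nat \<Rightarrow> nat \<Rightarrow> (nat \<times> nat) set" where
  "XX i s = pt i s ` {..<2^i}"

lemma X_eq: "cyc_shift (2^i) s ` BRS i = XX i s"
  unfolding BRS_eq XX_def image_image cyc_shift_def pt_def by simp

lemma mod_add_inj: "a < (n::nat) \<Longrightarrow> b < n \<Longrightarrow> (a+t) mod n = (b+t) mod n \<Longrightarrow> a = b"
proof (induction a b rule: linorder_wlog)
  case (le a b)
  then have "n dvd (b+t) - (a+t)" using mod_eq_dvd_iff_nat[of "a+t" "b+t" n] by simp
  then have "n dvd b - a" by simp
  then show ?case using le by (metis dvd_imp_le le_antisym less_imp_diff_less not_less zero_less_diff)
qed (simp add: eq_commute)

lemma rv_inj: "a < 2^i \<Longrightarrow> b < 2^i \<Longrightarrow> rv i a = rv i b \<Longrightarrow> a = b"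
proof (rule ccontr)
  assume a: "a < 2^i" "b < 2^i" "rv i a = rv i b" "a \<noteq> b"
  then have "a mod 2^i \<noteq> b mod 2^i" by simp
  then obtain m where m: "m < i" "a mod 2^m = b mod 2^m" "bit a m \<noteq> bit b m"
    using lowdiff by blast
  then show False using rv_cmp[of m i a b] rv_cmp[of m i b a] a by auto
qed

lemma pt_inj: "inj_on (pt i s) {..<2^i}"
  by (intro inj_onI) (auto simp: pt_def dest: rv_inj)

lemma no_between:
  assumes "j \<le> i" "q mod 2^j = x mod 2^j" "w mod 2^j \<noteq> x mod 2^j"
    "rv i q \<le> rv i w" "rv i w \<le> rv i x"
  shows False
proof -
  obtain m where m: "m < j" "w mod 2^m = x mod 2^m" "bit w m \<noteq> bit x m"
    using lowdiff[OF assms(3)] by blast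
  have mi: "m < i" using m assms by simp
  have qm: "q mod 2^m = x mod 2^m"
    using assms(2) m(1) mod_pow_mod[of m j q] mod_pow_mod[of m j x] by simp
  have qb: "bit q m = bit x m"
    using assms(2) m(1) bit_mod_pow[of m j q] bit_mod_pow[of m j x] by simp
  show False
  proof (cases "bit x m")
    case True
    then have "rv i w < rv i q" using rv_cmp[of m i q w] mi qm qb m by simp
    then show False using assms by simp
  next
    case False
    then have "rv i x < rv i w" using rv_cmp[of m i w x] mi m by simp
    then show False using assms by simp
  qed
qed

lemma bit_ge: "bit (x::nat) j \<Longrightarrow> 2^j \<le> x"
  by (metis bit_iff_odd div_less even_zero not_le)

lemma pair_left:
  assumes "bit (x::nat) j"
  shows "(x - 2^j) mod 2^j = x mod 2^j" "\<not> bit (x - 2^j) j"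
proof -
  have ge: "2^j \<le> x" using bit_ge assms by blast
  then show "(x - 2^j) mod 2^j = x mod 2^j"
    by (metis le_add_diff_inverse2 mod_add_self2)
  have "x div 2^j = Suc ((x - 2^j) div 2^j)"
    using ge by (simp add: le_div_geq)
  then show "\<not> bit (x - 2^j) j" using assms by (simp add: bit_iff_odd)
qed

lemma pair_right:
  assumes "bit (x::nat) j" "j < i"
  shows "((x + 2^j) mod 2^i) mod 2^j = x mod 2^j" "\<not> bit ((x + 2^j) mod 2^i) j"
proof -
  show "((x + 2^j) mod 2^i) mod 2^j = x mod 2^j"
    using assms mod_pow_mod[of j i "x+2^j"] by simp
  have "(x + 2^j) div 2^j = x div 2^j + 1" by (simp add: div_add_self2)
  then have "\<not> bit (x + 2^j) j" using assms by (simp add: bit_iff_odd)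
  then show "\<not> bit ((x + 2^j) mod 2^i) j" using bit_mod_pow assms by simp
qed

lemma pair_earlier:
  "j < i \<Longrightarrow> bit x j \<Longrightarrow> q mod 2^j = x mod 2^j \<Longrightarrow> \<not> bit q j \<Longrightarrow> rv i q < rv i x"
  using rv_cmp[of j i x q] by simp

lemma pair_order:
  assumes "j < k" "k < i" "bit x j" "q mod 2^j = x mod 2^j" "\<not> bit q j" "r mod 2^k = x mod 2^k"
  shows "rv i q < rv i r"
proof -
  have "r mod 2^j = x mod 2^j"
    using assms mod_pow_mod[of j k r] mod_pow_mod[of j k x] by simp
  moreover have "bit r j" using assms bit_mod_pow[of j k r] bit_mod_pow[of j k x] by simp
  ultimately show ?thesis using rv_cmp[of j i r q] assms by simp
qed

lemma gap_mod: "(A::nat) < B \<Longrightarrow> B < A + d \<Longrightarrow> A mod d = B mod d \<Longrightarrow> False"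
  using mod_eq_dvd_iff_nat[of A B d] by (auto dest: dvd_imp_le)

lemma funnel_mem:
  assumes x: "x < 2^i" and q: "q < 2^i" and j: "j < i"
    and qx: "q mod 2^j = x mod 2^j" and rq: "rv i q < rv i x"
    and cc: "(q+s) mod 2^i + 2^j = (x+s) mod 2^i \<or> (x+s) mod 2^i + 2^j = (q+s) mod 2^i"
  shows "pt i s q \<in> funnel (XX i s) (pt i s x)"
  unfolding funnel_def
proof (intro CollectI conjI ballI)
  show "pt i s q \<in> XX i s" using q by (simp add: XX_def)
  show "snd (pt i s q) < snd (pt i s x)" using rq by (simp add: pt_def)
  fix z assume z: "z \<in> XX i s - {pt i s x, pt i s q}"
  then obtain w where w: "w < 2^i" "z = pt i s w" by (auto simp: XX_def)
  have wx: "w \<noteq> x" "w \<noteq> q" using z w by auto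
  let ?C = "\<lambda>k. (k+s) mod 2^i"
  have cw: "?C w \<noteq> ?C x" "?C w \<noteq> ?C q" using mod_add_inj w x q wx by metis+
  show "\<not> in_box (pt i s x) (pt i s q) z"
  proof
    assume ib: "in_box (pt i s x) (pt i s q) z"
    have rows: "rv i q \<le> rv i w" "rv i w \<le> rv i x"
      using ib rq w by (auto simp: in_box_def pt_def)
    have cols: "min (?C x) (?C q) < ?C w" "?C w < max (?C x) (?C q)"
      using ib cw w by (auto simp: in_box_def pt_def)
    have "w mod 2^j \<noteq> x mod 2^j"
    proof
      assume e: "w mod 2^j = x mod 2^j"
      have "?C w mod 2^j = (w + s) mod 2^j" using mod_pow_mod j by simp
      also have "\<dots> = (x + s) mod 2^j" using e by (metis mod_add_left_eq)
      also have "\<dots> = ?C x mod 2^j" using mod_pow_mod j by simp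
      finally have e2: "?C w mod 2^j = ?C x mod 2^j" .
      show False
      proof (cases "?C q + 2^j = ?C x")
        case True
        then show False using gap_mod[of "?C w" "?C x" "2^j"] e2 cols by auto
      next
        case False
        then have "?C x + 2^j = ?C q" using cc by simp
        then show False using gap_mod[of "?C x" "?C w" "2^j"] e2 cols by auto
      qed
    qed
    then show False using no_between[of j i q x w] j qx rows by simp
  qed
qed

lemma colL: assumes "2^j \<le> (x::nat)" "2^j \<le> (x+s) mod n" "0 < n" shows "(x - 2^j + s) mod n = (x+s) mod n - 2^j"
proof -
  let ?r = "(x+s) mod n"
  have e: "x - 2^j + s = (x+s) div n * n + (?r - 2^j)" using div_mult_mod_eq[of "x+s" n] assms by linarith
  have "?r - 2^j < n" using assms by (meson le_less_trans diff_le_self mod_less_divisor)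
  then show ?thesis unfolding e by simp
qed

lemma colR: "(x+s) mod n + 2^j < (n::nat) \<Longrightarrow> ((x + 2^j) mod n + s) mod n = (x+s) mod n + 2^j"
  by (metis (no_types, lifting) add.commute add.left_commute mod_add_right_eq mod_less)

lemma ivt:
  "a < b \<Longrightarrow> b < length L \<Longrightarrow> P (L!a) \<noteq> P (L!b) \<Longrightarrow> \<exists>k. a \<le> k \<and> k < b \<and> P (L!k) \<noteq> P (L!Suc k)"
proof (induction b)
  case 0 then show ?case by simp
next
  case (Suc b)
  show ?case
  proof (cases "P (L!a) \<noteq> P (L!b) \<and> a < b")
    case True
    then show ?thesis using Suc.IH Suc.prems by (meson less_SucI Suc_lessD)
  next
    case False
    then have "P (L!b) \<noteq> P (L!Suc b) \<and> a \<le> b" using Suc.prems by (cases "a = b") auto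
    then show ?thesis by blast
  qed
qed

lemma br0: "linorder.insort_key (\<le>) f x xs = insort_key (f :: 'b \<Rightarrow> 'a::linorder) x xs"
  by (induction xs) (simp_all add: linorder.insort_key.simps[OF linorder_class.linorder_axioms])
lemma br: "linorder.sorted_key_list_of_set (\<le>) = (sorted_key_list_of_set :: ('b \<Rightarrow> 'a::linorder) \<Rightarrow> _)"
  by (rule ext)+ (simp add: linorder.sorted_key_list_of_set_def[OF linorder_class.linorder_axioms] sorted_key_list_of_set_def br0[abs_def])

definition JJ :: "nat \<Rightarrow> nat \<Rightarrow> nat \<Rightarrow> nat set" where
  "JJ i s x = {j. j + 2 < i \<and> bit x j \<and> 2^j \<le> (x+s) mod 2^i \<and> (x+s) mod 2^i + 2^j < 2^i}"

lemma alt_ge: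
  assumes x: "x < 2^i"
  shows "card (JJ i s x) \<le> alt (XX i s) (pt i s x)"
proof -
  define p where "p = pt i s x"
  define F where "F = funnel (XX i s) p"
  define L where "L = sorted_key_list_of_set snd F"
  define A where "A = {k. k + 1 < length L \<and>
       ((fst (L ! k) < fst p \<and> fst p < fst (L ! (k+1))) \<or>
        (fst (L ! (k+1)) < fst p \<and> fst p < fst (L ! k)))}"
  have altA: "alt (XX i s) p = card A" unfolding alt_def A_def L_def F_def Let_def by simp
  have FX: "F \<subseteq> XX i s" unfolding F_def funnel_def by auto
  have finX: "finite (XX i s)" unfolding XX_def by simp
  have injX: "inj_on snd (XX i s)"
    by (intro inj_onI) (auto simp: XX_def pt_def dest: rv_inj)
  interpret folding_insort_key "(\<le>) :: nat \<Rightarrow> nat \<Rightarrow> bool" "(<)" "XX i s" snd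
    by unfold_locales (rule injX)
  have setL: "set L = F" unfolding L_def using set_sorted_key_list_of_set[OF FX finite_subset[OF FX finX]] by (simp add: br)
  have sL: "sorted_wrt (<) (map snd L)" unfolding L_def using strict_sorted_key_list_of_set[OF FX] by (simp add: br)
  have idx: "a < b" if "a < length L" "b < length L" "snd (L!a) < snd (L!b)" for a b
  proof (rule ccontr)
    assume "\<not> a < b"
    then have "b \<le> a" by simp
    then have "snd (L!b) \<le> snd (L!a)"
      using sL that sorted_wrt_nth_less[of "(<)" "map snd L" b a]
      by (cases "b = a") auto
    then show False using that by simp
  qed
  have fne: "fst q \<noteq> fst p" if "q \<in> F" for q
  proof -
    from that obtain w where w: "w < 2^i" "q = pt i s w" "rv i w < rv i x"
      using FX unfolding F_def funnel_def p_def XX_def by (auto simp: pt_def)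
    then have "w \<noteq> x" by auto
    then show ?thesis using w x mod_add_inj[of w "2^i" x s] by (auto simp: p_def pt_def)
  qed
  have finA: "finite A" unfolding A_def by (rule finite_subset[of _ "{..<length L}"]) auto
  define u where "u j = x - 2^j" for j :: nat
  define v where "v j = (x + 2^j) mod 2^i" for j :: nat
  have ipos: "(0::nat) < 2^i" by simp
  have pairF: "pt i s (u j) \<in> F \<and> pt i s (v j) \<in> F \<and> fst (pt i s (u j)) < fst p \<and> fst p < fst (pt i s (v j))
      \<and> (u j) mod 2^j = x mod 2^j \<and> \<not> bit (u j) j \<and> (v j) mod 2^j = x mod 2^j \<and> \<not> bit (v j) j"
    if j: "j \<in> JJ i s x" for j
  proof -
    have ji: "j < i" "bit x j" "2^j \<le> (x+s) mod 2^i" "(x+s) mod 2^i + 2^j < 2^i"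
      using j by (auto simp: JJ_def)
    have ge: "2^j \<le> x" using bit_ge ji by blast
    have um: "(u j) mod 2^j = x mod 2^j" "\<not> bit (u j) j" using pair_left[OF ji(2)] by (auto simp: u_def)
    have vm: "(v j) mod 2^j = x mod 2^j" "\<not> bit (v j) j" using pair_right[OF ji(2) ji(1)] by (auto simp: v_def)
    have cu: "(u j + s) mod 2^i = (x+s) mod 2^i - 2^j" using colL[OF ge ji(3) ipos] by (simp add: u_def)
    have cv: "(v j + s) mod 2^i = (x+s) mod 2^i + 2^j" using colR[OF ji(4)] by (simp add: v_def)
    have ul: "u j < 2^i" using x by (simp add: u_def)
    have vl: "v j < 2^i" by (simp add: v_def)
    have "pt i s (u j) \<in> F" unfolding F_def p_def
      by (rule funnel_mem[OF x ul ji(1) um(1) pair_earlier[OF ji(1) ji(2) um]]) (use cu ji in simp)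
    moreover have "pt i s (v j) \<in> F" unfolding F_def p_def
      by (rule funnel_mem[OF x vl ji(1) vm(1) pair_earlier[OF ji(1) ji(2) vm]]) (use cv in simp)
    moreover have "fst (pt i s (u j)) < fst p \<and> fst p < fst (pt i s (v j))"
    proof -
      have pos: "(0::nat) < 2^j" by simp
      have lt: "(x+s) mod 2^i - 2^j < (x+s) mod 2^i" using ji(3) pos by linarith
      show ?thesis using cu cv lt by (simp add: p_def pt_def)
    qed
    ultimately show ?thesis using um vm by simp
  qed
  have exidx: "\<exists>k<length L. L!k = q" if "q \<in> F" for q using that setL by (metis in_set_conv_nth)
  define iu where "iu j = (SOME k. k < length L \<and> L!k = pt i s (u j))" for j
  define iv where "iv j = (SOME k. k < length L \<and> L!k = pt i s (v j))" for j
  have iuv: "iu j < length L \<and> L!(iu j) = pt i s (u j) \<and> iv j < length L \<and> L!(iv j) = pt i s (v j)"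
    if "j \<in> JJ i s x" for j
    using exidx pairF[OF that] unfolding iu_def iv_def by (metis (mono_tags, lifting) someI_ex)
  define lo where "lo j = min (iu j) (iv j)" for j
  define hi where "hi j = max (iu j) (iv j)" for j
  define sd where "sd q = (fst q < fst p)" for q :: "nat \<times> nat"
  have exsw: "\<exists>k. lo j \<le> k \<and> k < hi j \<and> sd (L!k) \<noteq> sd (L!Suc k)" if j: "j \<in> JJ i s x" for j
  proof -
    have d: "iu j \<noteq> iv j" "sd (L!iu j) \<noteq> sd (L!iv j)" using iuv[OF j] pairF[OF j] by (auto simp: sd_def)
    show ?thesis
    proof (cases "iu j < iv j")
      case True
      then show ?thesis using ivt[of "iu j" "iv j" L sd] d iuv[OF j] by (auto simp: lo_def hi_def)
    next
      case False
      then have "iv j < iu j" using d by simp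
      then show ?thesis using ivt[of "iv j" "iu j" L sd] d iuv[OF j] by (auto simp: lo_def hi_def)
    qed
  qed
  define g where "g j = (SOME k. lo j \<le> k \<and> k < hi j \<and> sd (L!k) \<noteq> sd (L!Suc k))" for j
  have gj: "lo j \<le> g j \<and> g j < hi j \<and> sd (L!g j) \<noteq> sd (L!Suc (g j))" if "j \<in> JJ i s x" for j
    using exsw[OF that] unfolding g_def by (rule someI_ex)
  have hilo: "hi j < lo k" if jJ: "j \<in> JJ i s x" and kJ: "k \<in> JJ i s x" and jk: "j < k" for j k
  proof -
    have jk2: "bit x j" "k < i" using jJ kJ by (auto simp: JJ_def)
    note PJ = pairF[OF jJ] and PK = pairF[OF kJ]
    note IJ = iuv[OF jJ] and IK = iuv[OF kJ]
    have ukx: "u k mod 2^k = x mod 2^k" and vkx: "v k mod 2^k = x mod 2^k" using PK by auto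
    have ujx: "u j mod 2^j = x mod 2^j" "\<not> bit (u j) j" and vjx: "v j mod 2^j = x mod 2^j" "\<not> bit (v j) j"
      using PJ by auto
    have r1: "rv i (u j) < rv i (u k)" using pair_order[OF jk jk2(2) jk2(1) ujx ukx] .
    have r2: "rv i (u j) < rv i (v k)" using pair_order[OF jk jk2(2) jk2(1) ujx vkx] .
    have r3: "rv i (v j) < rv i (u k)" using pair_order[OF jk jk2(2) jk2(1) vjx ukx] .
    have r4: "rv i (v j) < rv i (v k)" using pair_order[OF jk jk2(2) jk2(1) vjx vkx] .
    have sn: "snd (L!iu j) = rv i (u j) + 1" "snd (L!iv j) = rv i (v j) + 1"
             "snd (L!iu k) = rv i (u k) + 1" "snd (L!iv k) = rv i (v k) + 1"
      using IJ IK by (simp_all add: pt_def)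
    have "iu j < iu k" by (rule idx) (use IJ IK sn r1 in simp_all)
    moreover have "iu j < iv k" by (rule idx) (use IJ IK sn r2 in simp_all)
    moreover have "iv j < iu k" by (rule idx) (use IJ IK sn r3 in simp_all)
    moreover have "iv j < iv k" by (rule idx) (use IJ IK sn r4 in simp_all)
    ultimately show ?thesis by (simp add: hi_def lo_def)
  qed
  have mono: "g j < g k" if "j \<in> JJ i s x" "k \<in> JJ i s x" "j < k" for j k
    using gj[OF that(1)] gj[OF that(2)] hilo[OF that] by linarith
  have inj: "inj_on g (JJ i s x)"
  proof (intro inj_onI)
    fix j k assume "j \<in> JJ i s x" "k \<in> JJ i s x" "g j = g k"
    then show "j = k" using mono by (metis less_irrefl nat_neq_iff)
  qed
  have gA: "g ` JJ i s x \<subseteq> A"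
  proof
    fix k assume "k \<in> g ` JJ i s x"
    then obtain j where j: "j \<in> JJ i s x" "k = g j" by auto
    have kl: "Suc k < length L" using gj[OF j(1)] iuv[OF j(1)] j by (auto simp: hi_def)
    then have "L!k \<in> F" "L!Suc k \<in> F" using setL by auto
    then have "fst (L!k) \<noteq> fst p" "fst (L!Suc k) \<noteq> fst p" using fne by auto
    then show "k \<in> A" using gj[OF j(1)] j kl unfolding A_def sd_def by auto
  qed
  have "card (JJ i s x) \<le> card A" using card_inj_on_le[OF inj gA finA] .
  then show ?thesis using altA p_def by simp
qed

lemma card_bitset:
  assumes ji: "j < i"
  shows "2^i \<le> 2 * card {x. x < (2::nat)^i \<and> bit x j}"
proof -
  let ?n = "(2::nat)^i"
  define S where "S = {x. x < ?n \<and> bit x j}"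
  define S' where "S' = {x. x < ?n \<and> \<not> bit x j}"
  define f where "f x = (x + 2^j) mod ?n" for x
  have inj: "inj_on f S'" unfolding f_def S'_def
    by (intro inj_onI) (auto dest: mod_add_inj)
  have sub: "f ` S' \<subseteq> S"
  proof
    fix y assume "y \<in> f ` S'"
    then obtain x where x: "x < ?n" "\<not> bit x j" "y = f x" by (auto simp: S'_def)
    have "(x + 2^j) div 2^j = x div 2^j + 1" by (simp add: div_add_self2)
    then have "bit (x + 2^j) j" using x by (simp add: bit_iff_odd)
    then have "bit y j" using x ji bit_mod_pow[of j i "x + 2^j"] by (simp add: f_def)
    then show "y \<in> S" using x by (simp add: S_def f_def)
  qed
  have c1: "card S' \<le> card S"
    using card_inj_on_le[OF inj sub] by (simp add: S_def)
  have "S \<union> S' = {..<?n}" "S \<inter> S' = {}" by (auto simp: S_def S'_def)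
  then have "card S + card S' = ?n"
    by (metis card_Un_disjoint card_lessThan finite_Un finite_lessThan)
  then show ?thesis using c1 unfolding S_def by linarith
qed

lemma card_good:
  assumes ji: "j + 2 < i"
  shows "2^(i-2) \<le> card {x. x < (2::nat)^i \<and> j \<in> JJ i s x}"
proof -
  let ?n = "(2::nat)^i"
  define S where "S = {x. x < ?n \<and> bit x j}"
  define E where "E = {x. x < ?n \<and> ((x+s) mod ?n < 2^j \<or> ?n \<le> (x+s) mod ?n + 2^j)}"
  define C where "C x = (x+s) mod ?n" for x
  have cS: "2^i \<le> 2 * card S" unfolding S_def using card_bitset ji by simp
  have injC: "inj_on C E" unfolding C_def E_def by (intro inj_onI) (auto dest: mod_add_inj)
  have CE: "C ` E \<subseteq> {..<2^j} \<union> {?n - 2^j..<?n}" unfolding C_def E_def by auto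
  have "card E = card (C ` E)" using card_image[OF injC] by simp
  also have "\<dots> \<le> card ({..<2^j} \<union> {?n - 2^j..<?n})" by (rule card_mono[OF _ CE]) simp
  also have "\<dots> \<le> card {..<(2::nat)^j} + card {?n - 2^j..<?n}" by (rule card_Un_le)
  also have "\<dots> \<le> 2^j + 2^j" by simp
  finally have cE: "card E \<le> 2 * 2^j" by simp
  have sub: "S - E \<subseteq> {x. x < ?n \<and> j \<in> JJ i s x}"
    unfolding S_def E_def JJ_def using ji by auto
  have fin: "finite {x. x < ?n \<and> j \<in> JJ i s x}" by simp
  have "card S - card E \<le> card (S - E)"
    by (rule diff_card_le_card_Diff) (simp add: E_def)
  also have "\<dots> \<le> card {x. x < ?n \<and> j \<in> JJ i s x}" by (rule card_mono[OF fin sub])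
  finally have k: "card S - card E \<le> card {x. x < ?n \<and> j \<in> JJ i s x}" .
  have p1: "(2::nat)^i = 4 * 2^(i-2)"
    using ji by (metis (no_types) add_diff_inverse_nat less_imp_le_nat not_less power_add
        numeral_Bit0 one_add_one power2_eq_square le_add2 le_less_trans mult_2 nat_less_le
        [of 2 i] zero_less_two) 
  have p2: "2 * (2::nat)^j \<le> 2^(i-2)"
  proof -
    have "2 * (2::nat)^j = 2^(j+1)" by simp
    also have "\<dots> \<le> 2^(i-2)" using ji by (intro power_increasing) auto
    finally show ?thesis .
  qed
  show ?thesis using k cS cE p1 p2 by linarith
qed

lemma sum_JJ: "(i - 2) * 2^(i-2) \<le> (\<Sum>x<(2::nat)^i. card (JJ i s x))"
proof -
  let ?n = "(2::nat)^i"
  have sub: "JJ i s x \<subseteq> {..<i-2}" for x by (auto simp: JJ_def)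
  have "card (JJ i s x) = (\<Sum>j<i-2. if j \<in> JJ i s x then 1 else 0)" for x
    using sub[of x] by (simp add: sum.If_cases Int_absorb1)
  then have "(\<Sum>x<?n. card (JJ i s x)) = (\<Sum>x<?n. \<Sum>j<i-2. if j \<in> JJ i s x then 1 else 0)"
    by simp
  also have "\<dots> = (\<Sum>j<i-2. \<Sum>x<?n. if j \<in> JJ i s x then 1 else 0)"
    by (rule sum.swap)
  also have "\<dots> = (\<Sum>j<i-2. card {x. x < ?n \<and> j \<in> JJ i s x})"
  proof (rule sum.cong[OF refl])
    fix j
    have "(\<Sum>x<?n. if j \<in> JJ i s x then 1 else 0) = card ({..<?n} \<inter> {x. j \<in> JJ i s x})"
      by (simp add: sum.If_cases)
    also have "{..<?n} \<inter> {x. j \<in> JJ i s x} = {x. x < ?n \<and> j \<in> JJ i s x}" by auto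
    finally show "(\<Sum>x<?n. if j \<in> JJ i s x then 1 else 0) = card {x. x < ?n \<and> j \<in> JJ i s x}" .
  qed
  also have "\<dots> \<ge> (\<Sum>j<i-2. 2^(i-2))"
    by (rule sum_mono) (use card_good in auto)
  finally show ?thesis by simp
qed

lemma WB2_bound: "i * 2^i \<le> 4 * WB2 (cyc_shift (2^i) s ` BRS i)"
proof -
  let ?n = "(2::nat)^i"
  let ?X = "XX i s"
  have cX: "card ?X = ?n" unfolding XX_def using card_image[OF pt_inj] by simp
  have "(\<Sum>p\<in>?X. alt ?X p) = (\<Sum>x<?n. alt ?X (pt i s x))"
    unfolding XX_def using sum.reindex[OF pt_inj] by (simp add: XX_def[symmetric])
  also have "\<dots> \<ge> (\<Sum>x<?n. card (JJ i s x))"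
    by (rule sum_mono) (simp add: alt_ge)
  finally have sA: "(i - 2) * 2^(i-2) \<le> (\<Sum>p\<in>?X. alt ?X p)" using sum_JJ[of i s] by linarith
  have W: "WB2 ?X = ?n + (\<Sum>p\<in>?X. alt ?X p)" unfolding WB2_def cX ..
  show ?thesis
  proof (cases "i < 2")
    case True
    then show ?thesis unfolding X_eq W by (cases i) auto
  next
    case False
    then have p1: "(2::nat)^i = 4 * 2^(i-2)"
      by (metis add_diff_inverse_nat power_add numeral_Bit0 power2_eq_square mult_2 not_less)
    have "i * 2^i = 4 * ((i-2) * 2^(i-2)) + 2 * ?n" using False p1
      by (simp add: algebra_simps)
    then show ?thesis unfolding X_eq W using sA by simp
  qed
qed

theorem lemma4p18:
  shows "\<exists>c::real. c > 0 \<and>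
    (\<forall>i s::nat. s < 2^i \<longrightarrow>
       real (WB2 (cyc_shift (2^i) s ` BRS i)) \<ge> c * real (2^i) * log 2 (real (2^i)))"
proof (intro exI[of _ "1/4"] conjI allI impI)
  fix i s :: nat
  have "real (i * 2^i) \<le> real (4 * WB2 (cyc_shift (2^i) s ` BRS i))"
    using WB2_bound[of i s] by linarith
  then have "real i * 2^i \<le> 4 * real (WB2 (cyc_shift (2^i) s ` BRS i))" by simp
  moreover have "log 2 (real (2^i)) = real i" by simp
  ultimately show "1/4 * real (2^i) * log 2 (real (2^i)) \<le> real (WB2 (cyc_shift (2^i) s ` BRS i))"
    by (simp add: mult.commute)
qed simp

end
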